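(* Let $p$ be an odd prime and $l_1,l_2\ge0$ integers, and put $d=l_1+l_2-\tfrac12$. There exists an integer $s_0\ge0$ such that for every integer $s\ge s_0$ and every integer $a$ with $\frac{p^s-1}2-l_1\ge l_2+a\ge0$, $$\left|\binom{-\frac12-l_1}{l_2+a}-\binom{\frac{p^s-1}2-l_1}{l_2+a}\right|_p\le p^{-(s-d-a)}.$$
   Context: $|\cdot|_p$ is the $p$-adic norm on $\mathbb Q_p$. For $y\in\mathbb Q_p$ and an integer $k\ge0$, $\binom{y}{k}=\frac{y(y-1)\cdots(y-k+1)}{k!}$; the numbers $\binom{-1/2-l_1}{k}$ lie in $\mathbb Z_p$. *)

theory Defs
  imports "HOL-Computational_Algebra.Computational_Algebra"
begin

definition padic_val_rat :: "nat \<Rightarrow> rat \<Rightarrow> int" where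
  "padic_val_rat p q =
     (case quotient_of q of (a, b) \<Rightarrow>
        int (multiplicity (int p) a) - int (multiplicity (int p) b))"

definition padic_norm :: "nat \<Rightarrow> rat \<Rightarrow> real" where
  "padic_norm p q = (if q = 0 then 0 else real p powr (- real_of_int (padic_val_rat p q)))"

end

theory Submission
  imports Defs
begin

lemma val_eq:
  fixes p :: nat and M N :: int
  assumes "prime p" "M \<noteq> 0" "N \<noteq> 0" "q = of_int (int p ^ s * M) / of_int N"
  shows "q \<noteq> 0 \<and> padic_val_rat p q = int s + int (multiplicity (int p) M) - int (multiplicity (int p) N)"
proof -
  obtain a b where qa: "quotient_of q = (a, b)" by (cases "quotient_of q") auto
  have b: "b > 0" using quotient_of_denom_pos[OF qa] .
  have qd: "q = of_int a / of_int b" using quotient_of_div[OF qa] .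
  have pp: "prime_elem (int p)" using assms(1) by simp
  have p0: "int p \<noteq> 0" using assms(1) by (auto simp: prime_gt_0_nat)
  have q0: "q \<noteq> 0" using assms p0 by simp
  hence a0: "a \<noteq> 0" using qd by auto
  have "of_int a * of_int N = (of_int (int p ^ s * M) * of_int b :: rat)"
    using qd assms(4) b assms(3) by (auto simp: field_simps)
  hence eq: "a * N = int p ^ s * M * b"
    by (metis of_int_eq_iff of_int_mult)
  have "multiplicity (int p) (a * N) = multiplicity (int p) (int p ^ s * M * b)"
    using eq by simp
  hence "multiplicity (int p) a + multiplicity (int p) N
        = s + multiplicity (int p) M + multiplicity (int p) b"
    using pp a0 assms(2,3) b p0
    by (simp add: prime_elem_multiplicity_mult_distrib)
  thus ?thesis using q0 qa unfolding padic_val_rat_def by simp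
qed

lemma multf_Suc:
  fixes p :: nat assumes "prime p"
  shows "multiplicity (int p) (fact (Suc k) :: int)
      = multiplicity (int p) (int (Suc k)) + multiplicity (int p) (fact k :: int)"
proof -
  have pp: "prime_elem (int p)" using assms(1) by simp
  show ?thesis
    by (simp add: fact_Suc[of k] prime_elem_multiplicity_mult_distrib[OF pp] del: of_nat_Suc)
qed

lemma mult_fact_rec:
  fixes p :: nat assumes "prime p"
  shows "multiplicity (int p) (fact k :: int) = k div p + multiplicity (int p) (fact (k div p) :: int)"
proof (induction k)
  case 0 then show ?case by simp
next
  case (Suc k)
  have p1: "p > 1" using assms prime_gt_1_nat by blast
  have p0: "int p \<noteq> 0" using p1 by simp
  note fs = multf_Suc[OF assms]
  show ?case
  proof (cases "p dvd Suc k")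
    case True
    hence dk: "Suc k div p = Suc (k div p)" by (simp add: div_Suc dvd_eq_mod_eq_0)
    have "Suc k = p * (Suc k div p)" using True by simp
    hence "int (Suc k) = int p * int (Suc (k div p))" using dk by (metis of_nat_mult)
    hence v: "multiplicity (int p) (int (Suc k)) = Suc (multiplicity (int p) (int (Suc (k div p))))"
      using multiplicity_times_same[of "int (Suc (k div p))" "int p"] p1 by (simp del: of_nat_Suc)
    show ?thesis unfolding dk fs[of k] fs[of "k div p"] v using Suc.IH by simp
  next
    case False
    hence dk: "Suc k div p = k div p" by (simp add: div_Suc dvd_eq_mod_eq_0)
    have "\<not> int p dvd int (Suc k)" using False by (simp del: of_nat_Suc) 
    hence "multiplicity (int p) (int (Suc k)) = 0" by (rule not_dvd_imp_multiplicity_0)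
    then show ?thesis unfolding dk fs[of k] using Suc.IH by simp
  qed
qed

lemma mult_fact_bound:
  fixes p :: nat assumes "prime p" "k \<ge> 1"
  shows "multiplicity (int p) (fact k :: int) \<le> k - 1"
  using assms(2)
proof (induction k rule: less_induct)
  case (less k)
  have p1: "p \<ge> 2" using assms prime_ge_2_nat by blast
  have r: "multiplicity (int p) (fact k :: int) = k div p + multiplicity (int p) (fact (k div p) :: int)"
    by (rule mult_fact_rec[OF assms(1)])
  have kp: "p * (k div p) \<le> k" by simp
  show ?case
  proof (cases "k div p = 0")
    case True then show ?thesis using r less.prems by simp
  next
    case False
    have lt: "k div p < k" using p1 less.prems by simp
    have "multiplicity (int p) (fact (k div p) :: int) \<le> k div p - 1"
      using less.IH[OF lt] False by simp
    moreover have "2 * (k div p) \<le> k" using kp p1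
      by (meson le_trans mult_le_mono1)
    ultimately show ?thesis using r False by linarith
  qed
qed
lemma prod_cong_ex:
  fixes P :: int and c :: "nat \<Rightarrow> int"
  shows "\<exists>M. (\<Prod>i<k. P - c i) = (\<Prod>i<k. - c i) + P * M"
proof (induction k)
  case 0 then show ?case by simp
next
  case (Suc k)
  then obtain M where M: "(\<Prod>i<k. P - c i) = (\<Prod>i<k. - c i) + P * M" by blast
  show ?case
    by (rule exI[of _ "(\<Prod>i<k. - c i) + M * (P - c k)"]) (simp add: M algebra_simps)
qed

lemma main_k:
  fixes p l1 k s :: nat
  assumes "prime p" "odd p" "k \<ge> 1"
  shows "padic_norm p
       (((- 1/2 - of_nat l1 :: rat) gchoose k)
        - (((of_nat p ^ s - 1) / 2 - of_nat l1 :: rat) gchoose k))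
     \<le> real p powr (- (real s - real k + 1))"
proof -
  define c where "c i = 2 * int l1 + 2 * int i + 1" for i
  define P where "P = int p ^ s"
  have e1: "(- 1/2 - of_nat l1 :: rat) - of_nat i = of_int (- c i) / 2" for i
    by (simp add: c_def field_simps)
  have e2: "((of_nat p ^ s - 1) / 2 - of_nat l1 :: rat) - of_nat i = of_int (P - c i) / 2" for i
    by (simp add: c_def P_def field_simps)
  have pr: "(\<Prod>i=0..<k. (of_int (x i) / 2 :: rat)) = of_int (\<Prod>i<k. x i) / 2 ^ k" for x
    by (simp add: prod_dividef atLeast0LessThan)
  define A where "A = (\<Prod>i<k. - c i)"
  define B where "B = (\<Prod>i<k. P - c i)"
  have g1: "(- 1/2 - of_nat l1 :: rat) gchoose k = of_int A / (2 ^ k * fact k)"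
    unfolding gbinomial_prod_rev e1 pr A_def by simp
  have g2: "((of_nat p ^ s - 1) / 2 - of_nat l1 :: rat) gchoose k = of_int B / (2 ^ k * fact k)"
    unfolding gbinomial_prod_rev e2 pr B_def by simp
  obtain M where M0: "(\<Prod>i<k. P - c i) = (\<Prod>i<k. - c i) + P * M" using prod_cong_ex by blast
  have M: "B = A + P * M" using M0 A_def B_def by simp
  define N :: int where "N = 2 ^ k * fact k"
  have D: "((- 1/2 - of_nat l1 :: rat) gchoose k)
        - (((of_nat p ^ s - 1) / 2 - of_nat l1 :: rat) gchoose k)
       = of_int (int p ^ s * (- M)) / of_int N"
    unfolding g1 g2 M N_def P_def by (simp add: field_simps)
  show ?thesis
  proof (cases "M = 0")
    case True
    then show ?thesis unfolding D by (simp add: padic_norm_def)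
  next
    case False
    have N0: "N \<noteq> 0" by (simp add: N_def)
    have mM: "- M \<noteq> 0" using False by simp
    note VV = val_eq[OF assms(1) mM N0 D]
    have q0: "((- 1/2 - of_nat l1 :: rat) gchoose k)
        - (((of_nat p ^ s - 1) / 2 - of_nat l1 :: rat) gchoose k) \<noteq> 0" using VV by blast
    have v: "padic_val_rat p (((- 1/2 - of_nat l1 :: rat) gchoose k)
        - (((of_nat p ^ s - 1) / 2 - of_nat l1 :: rat) gchoose k))
            = int s + int (multiplicity (int p) (- M)) - int (multiplicity (int p) N)" using VV by blast
    have pp: "prime_elem (int p)" using assms(1) by simp
    have p3: "p \<ge> 3" using assms(1,2) prime_ge_2_nat
      by (metis One_nat_def Suc_1 dvd_refl le_antisym not_less_eq_eq numeral_3_eq_3)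
    have "\<not> int p dvd 2 ^ k"
    proof
      assume "int p dvd 2 ^ k"
      hence "p dvd 2 ^ k" by (metis of_nat_dvd_iff of_nat_numeral of_nat_power)
      hence "p dvd 2" using assms(1) prime_dvd_power by blast
      thus False using p3 by (auto dest: dvd_imp_le)
    qed
    hence m2: "multiplicity (int p) (2 ^ k) = 0" by (rule not_dvd_imp_multiplicity_0)
    have "multiplicity (int p) N = multiplicity (int p) (fact k :: int)"
      unfolding N_def using pp m2 by (simp add: prime_elem_multiplicity_mult_distrib)
    with mult_fact_bound[OF assms(1,3)]
    have "padic_val_rat p (((- 1/2 - of_nat l1 :: rat) gchoose k)
        - (((of_nat p ^ s - 1) / 2 - of_nat l1 :: rat) gchoose k)) \<ge> int s - int k + 1"
      using v assms(3) by linarith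
    hence "- real_of_int (padic_val_rat p (((- 1/2 - of_nat l1 :: rat) gchoose k)
        - (((of_nat p ^ s - 1) / 2 - of_nat l1 :: rat) gchoose k))) \<le> - (real s - real k + 1)"
      by linarith
    moreover have "real p \<ge> 1" using p3 by simp
    ultimately show ?thesis unfolding padic_norm_def using q0
      by (simp add: powr_mono)
  qed
qed

theorem lemma10p3:
  fixes p l1 l2 :: nat
  assumes "prime p" and "odd p"
  shows "\<exists>s0::nat. \<forall>s\<ge>s0. \<forall>a::int.
     ((int p ^ s - 1) div 2 - int l1 \<ge> int l2 + a \<and> int l2 + a \<ge> 0) \<longrightarrow>
     padic_norm p
       (((- 1/2 - of_nat l1 :: rat) gchoose nat (int l2 + a))
        - (((of_nat p ^ s - 1) / 2 - of_nat l1 :: rat) gchoose nat (int l2 + a)))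
     \<le> real p powr (- (real s - (real l1 + real l2 - 1/2) - real_of_int a))"
proof (intro exI[of _ 0] allI impI)
  fix s :: nat and a :: int
  assume h: "(int p ^ s - 1) div 2 - int l1 \<ge> int l2 + a \<and> int l2 + a \<ge> 0"
  define k where "k = nat (int l2 + a)"
  have nk: "nat (int l2 + a) = k" using k_def by simp
  have kr: "real k = real l2 + real_of_int a" using h k_def by simp
  have p0: "real p > 0" using assms(1) prime_gt_0_nat by simp
  show "padic_norm p
       (((- 1/2 - of_nat l1 :: rat) gchoose nat (int l2 + a))
        - (((of_nat p ^ s - 1) / 2 - of_nat l1 :: rat) gchoose nat (int l2 + a)))
     \<le> real p powr (- (real s - (real l1 + real l2 - 1/2) - real_of_int a))"
  proof (cases "k = 0")
    case True
    then show ?thesis using p0 nk by (simp add: padic_norm_def)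
  next
    case False
    have "real p \<ge> 1" using assms(1) prime_ge_1_nat by simp
    hence "real p powr (- (real s - real k + 1)) \<le> real p powr (- (real s - (real l1 + real l2 - 1/2) - real_of_int a))"
      using kr by (intro powr_mono) auto
    moreover note main_k[OF assms, of k l1 s]
    ultimately show ?thesis unfolding nk using False by linarith
  qed
qed

end
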